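(* Let $\phi_1,\phi_2\colon\mathbb{R}\to[0,\infty)$ be continuous probability density functions such that $I_1=\{x:\phi_1(x)>0\}=(a_1,b_1)$ and $I_2=\{y:\phi_2(y)>0\}=(a_2,b_2)$ are bounded open intervals, with $a_1=0$. Let $F_1,F_2$ be the corresponding cumulative distribution functions, and define $K\colon[a_1,b_1]\to[a_2,b_2]$ by $K(x)=F_2^{-1}(F_1(x))$, where $F_2^{-1}$ is the inverse of the continuous strictly increasing bijection $F_2\colon[a_2,b_2]\to[0,1]$. Let $q\colon\mathbb{R}\to[0,\infty)$ be uniformly continuous and Lebesgue integrable, and set $$V=\int_{I_1} x\,\frac{\phi_1(x)}{\phi_2(K(x))}\,q(K(x))\,dx .$$ For $n\ge 1$ and $k=0,1,\dots,n$ let $x^{(n)}_k\in[a_1,b_1]$ be the point with $F_1(x^{(n)}_k)=k/n$ (so $x^{(n)}_0=a_1$, $x^{(n)}_n=b_1$, and $\int_{x^{(n)}_k}^{x^{(n)}_{k+1}}\phi_1=1/n$), let $y^{(n)}_k=K(x^{(n)}_k)$, and define $$V_n=\sum_{k=0}^{n-1}\frac{x^{(n)}_{k+1}+x^{(n)}_k}{2}\int_{y^{(n)}_k}^{y^{(n)}_{k+1}}q(s)\,ds .$$ Then $V_n\to V$ as $n\to\infty$.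
   Context: Financial interpretation (not needed for the claim): $\phi_1$ is the density of a one-step cash flow at horizon $T$, $\phi_2$ the density of the terminal value $S(T)$ of a traded benchmark security, $q$ the state price density of $S(T)$ (the second strike-derivative of the call price function), $V$ the value of the continuous portfolio of Arrow–Debreu securities replicating the cash flow distribution, and $V_n$ the value of the finite portfolio of cash-or-nothing calls approximating it. *)

theory Defs
  imports "HOL-Analysis.Analysis"
begin

definition cdf :: "(real \<Rightarrow> real) \<Rightarrow> real \<Rightarrow> real" where
  "cdf phi x = integral {..x} phi"

definition Kmap :: "(real \<Rightarrow> real) \<Rightarrow> (real \<Rightarrow> real) \<Rightarrow> real \<Rightarrow> real \<Rightarrow> real \<Rightarrow> real" where
  "Kmap phi1 phi2 a2 b2 x = the_inv_into {a2..b2} (cdf phi2) (cdf phi1 x)"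

definition gridpt :: "(real \<Rightarrow> real) \<Rightarrow> real \<Rightarrow> real \<Rightarrow> nat \<Rightarrow> nat \<Rightarrow> real" where
  "gridpt phi1 a1 b1 n k = the_inv_into {a1..b1} (cdf phi1) (real k / real n)"

end

theory Submission
  imports Defs
begin

lemma spike_empty:
  fixes f :: "real \<Rightarrow> real"
  assumes "\<And>y. y \<in> (S - T) \<union> (T - S) \<Longrightarrow> f y = 0"
  shows "(f has_integral i) S \<longleftrightarrow> (f has_integral i) T"
proof (rule has_integral_spike_set_eq)
  have "{x \<in> S - T. f x \<noteq> 0} = {}" "{x \<in> T - S. f x \<noteq> 0} = {}" using assms by auto
  then show "negligible {x \<in> S - T. f x \<noteq> 0}" "negligible {x \<in> T - S. f x \<noteq> 0}" by (metis negligible_empty)+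
qed

lemma integral_spike_empty:
  fixes f :: "real \<Rightarrow> real"
  assumes "\<And>y. y \<in> (S - T) \<union> (T - S) \<Longrightarrow> f y = 0"
  shows "integral S f = integral T f"
proof (rule integral_spike_set)
  have "{x \<in> S - T. f x \<noteq> 0} = {}" "{x \<in> T - S. f x \<noteq> 0} = {}" using assms by auto
  then show "negligible {x \<in> S - T. f x \<noteq> 0}" "negligible {x \<in> T - S. f x \<noteq> 0}" by (metis negligible_empty)+
qed

locale dens =
  fixes phi :: "real \<Rightarrow> real" and a b :: real
  assumes cont: "continuous_on UNIV phi"
    and nonneg: "\<And>x. phi x \<ge> 0"
    and dens: "(phi has_integral 1) UNIV"
    and supp: "{x. phi x > 0} = {a<..<b}"
begin

definition C where "C x = integral {a..x} phi"
definition Cinv where "Cinv = the_inv_into {a..b} C"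

lemma zero_out: assumes "x \<notin> {a<..<b}" shows "phi x = 0"
proof -
  have "x \<notin> {x. phi x > 0}" using supp assms by simp
  then show ?thesis using nonneg[of x] by simp
qed

lemma pos_in: "x \<in> {a<..<b} \<Longrightarrow> phi x > 0" using supp by auto

lemma ab: "a < b"
proof (rule ccontr)
  assume "\<not> a < b"
  then have "\<And>x. phi x = 0" using zero_out by auto
  then have "phi = (\<lambda>x. 0)" by (intro ext)
  then have "(phi has_integral 0) UNIV" by simp
  then have "(0::real) = 1" using has_integral_unique dens by blast
  then show False by simp
qed

lemma contab: "continuous_on S phi" using cont continuous_on_subset by blast

lemma intC: "(phi has_integral C x) {a..x}"
  unfolding C_def using integrable_continuous_interval[OF contab] by auto

lemma C_cdf: "x \<in> {a..b} \<Longrightarrow> cdf phi x = C x"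
  unfolding cdf_def C_def
  by (rule integral_spike_empty[symmetric]) (auto intro: zero_out)

lemma Ca: "C a = 0" unfolding C_def by simp

lemma Cb: "C b = 1"
proof -
  have "(phi has_integral 1) {a..b}"
    using dens spike_empty[of UNIV "{a..b}" phi 1] zero_out by force
  then show ?thesis using intC[of b] has_integral_unique by blast
qed

lemma C_deriv: "x \<in> {a<..<b} \<Longrightarrow> (C has_real_derivative phi x) (at x)"
proof -
  assume x: "x \<in> {a<..<b}"
  have "(C has_real_derivative phi x) (at x within {a..b})"
    unfolding C_def[abs_def] by (rule integral_has_real_derivative) (use x contab in auto)
  then show ?thesis using x
    by (subst (asm) at_within_interior[of x]) auto
qed

lemma C_cont: "continuous_on {a..b} C"
  unfolding C_def[abs_def]
  by (rule DERIV_continuous_on, rule integral_has_real_derivative) (auto intro: contab)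

lemma C_strict: "a \<le> x \<Longrightarrow> x < y \<Longrightarrow> y \<le> b \<Longrightarrow> C x < C y"
proof (rule DERIV_pos_imp_increasing_open[of x y C])
  fix z assume "a \<le> x" "y \<le> b" "x < z" "z < y"
  then have "z \<in> {a<..<b}" by auto
  then show "\<exists>d. (C has_real_derivative d) (at z) \<and> 0 < d" using C_deriv pos_in by blast
qed (auto intro: continuous_on_subset[OF C_cont])

lemma C_inj: "inj_on C {a..b}"
proof (rule inj_onI, rule ccontr)
  fix x y assume "x \<in> {a..b}" "y \<in> {a..b}" "C x = C y" "x \<noteq> y"
  then show False using C_strict[of x y] C_strict[of y x] by (cases "x < y") auto
qed

lemma C_image: "C ` {a..b} = {0..1}"
proof
  show "C ` {a..b} \<subseteq> {0..1}"
  proof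
    fix y assume "y \<in> C ` {a..b}"
    then obtain x where x: "x \<in> {a..b}" "y = C x" by auto
    have "C a \<le> C x" using C_strict[of a x] x by (cases "a = x") auto
    moreover have "C x \<le> C b" using C_strict[of x b] x by (cases "x = b") auto
    ultimately show "y \<in> {0..1}" using x Ca Cb by simp
  qed
  show "{0..1} \<subseteq> C ` {a..b}"
  proof
    fix t :: real assume "t \<in> {0..1}"
    then obtain x where "a \<le> x" "x \<le> b" "C x = t"
      using IVT'[of C a t b] Ca Cb ab C_cont by auto
    then show "t \<in> C ` {a..b}" by auto
  qed
qed

lemma Cinv_C: "x \<in> {a..b} \<Longrightarrow> Cinv (C x) = x"
  unfolding Cinv_def by (rule the_inv_into_f_f[OF C_inj])

lemma C_Cinv: "t \<in> {0..1} \<Longrightarrow> C (Cinv t) = t"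
  unfolding Cinv_def by (rule f_the_inv_into_f[OF C_inj]) (simp add: C_image)

lemma Cinv_in: "t \<in> {0..1} \<Longrightarrow> Cinv t \<in> {a..b}"
  unfolding Cinv_def by (rule the_inv_into_into[OF C_inj]) (auto simp: C_image)

lemma Cinv_cont: "continuous_on {0..1} Cinv"
  using continuous_on_inv[OF C_cont compact_Icc, of Cinv] Cinv_C C_image by auto

lemma Cinv_mono:
  assumes s: "s \<in> {0..1}" and t: "t \<in> {0..1}" and st: "s \<le> t"
  shows "Cinv s \<le> Cinv t"
proof (rule ccontr)
  assume "\<not> Cinv s \<le> Cinv t"
  then have "Cinv t < Cinv s" by simp
  moreover have "a \<le> Cinv t" "Cinv s \<le> b" using Cinv_in[OF s] Cinv_in[OF t] by auto
  ultimately have "C (Cinv t) < C (Cinv s)" by (intro C_strict)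
  then show False using C_Cinv[OF s] C_Cinv[OF t] st by simp
qed

lemma Cinv_open:
  assumes t: "t \<in> {0<..<1}" shows "Cinv t \<in> {a<..<b}"
proof -
  have t1: "t \<in> {0..1}" using t by simp
  have "Cinv t \<noteq> a" using C_Cinv[OF t1] Ca t by auto
  moreover have "Cinv t \<noteq> b" using C_Cinv[OF t1] Cb t by auto
  ultimately show ?thesis using Cinv_in[OF t1] by simp
qed

lemma cdf_inv: "the_inv_into {a..b} (cdf phi) = Cinv"
  unfolding Cinv_def the_inv_into_def
proof (rule ext)
  fix y
  have "(\<lambda>x. x \<in> {a..b} \<and> cdf phi x = y) = (\<lambda>x. x \<in> {a..b} \<and> C x = y)"
    using C_cdf by auto
  then show "(THE x. x \<in> {a..b} \<and> cdf phi x = y) = (THE x. x \<in> {a..b} \<and> C x = y)"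
    by simp
qed

lemma C_open: "x \<in> {a<..<b} \<Longrightarrow> C x \<in> {0<..<1}"
  using C_strict[of a x] C_strict[of x b] Ca Cb by auto

end

lemma piece_bound:
  fixes g :: "real \<Rightarrow> real"
  assumes st: "s \<le> t" and gI: "(g has_integral I) {s..t}"
    and gJ: "((\<lambda>x. x * g x) has_integral J) {s..t}"
    and gpos: "\<And>x. x \<in> {s..t} \<Longrightarrow> g x \<ge> 0"
  shows "\<bar>J - (t + s) / 2 * I\<bar> \<le> (t - s) / 2 * I"
proof -
  define m where "m = (t + s) / 2"
  define h where "h = (t - s) / 2"
  have hI: "((\<lambda>x. x * g x - m * g x) has_integral (J - m * I)) {s..t}"
    by (intro has_integral_diff gJ has_integral_mult_right gI)
  have up: "((\<lambda>x. h * g x) has_integral (h * I)) {s..t}"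
    by (intro has_integral_mult_right gI)
  have lo: "((\<lambda>x. - (h * g x)) has_integral (- (h * I))) {s..t}"
    by (intro has_integral_neg has_integral_mult_right gI)
  have "J - m * I \<le> h * I"
  proof (rule has_integral_le[OF hI up])
    fix x assume x: "x \<in> {s..t}"
    have e: "x - m - h = x - t" unfolding m_def h_def by (simp add: field_simps)
    have "(x - m - h) * g x \<le> 0"
      unfolding e using x gpos[OF x] by (intro mult_nonpos_nonneg) auto
    then show "x * g x - m * g x \<le> h * g x" by (simp add: algebra_simps)
  qed
  moreover have "- (h * I) \<le> J - m * I"
  proof (rule has_integral_le[OF lo hI])
    fix x assume x: "x \<in> {s..t}"
    have e: "x - m + h = x - s" unfolding m_def h_def by (simp add: field_simps)
    have "0 \<le> (x - m + h) * g x"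
      unfolding e using x gpos[OF x] by (intro mult_nonneg_nonneg) auto
    then show "- (h * g x) \<le> x * g x - m * g x" by (simp add: algebra_simps)
  qed
  ultimately show ?thesis unfolding m_def h_def by linarith
qed

lemma deriv_int_at:
  fixes f :: "real \<Rightarrow> real"
  assumes "continuous_on {a..b} f" "x \<in> {a<..<b}"
  shows "((\<lambda>y. integral {a..y} f) has_real_derivative f x) (at x)"
proof -
  have "((\<lambda>y. integral {a..y} f) has_real_derivative f x) (at x within {a..b})"
    by (rule integral_has_real_derivative) (use assms in auto)
  then show ?thesis using assms(2)
    by (subst (asm) at_within_interior[of x]) auto
qed

lemma cont_int:
  fixes f :: "real \<Rightarrow> real"
  assumes "continuous_on {a..b} f"
  shows "continuous_on {a..b} (\<lambda>y. integral {a..y} f)"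
  by (rule DERIV_continuous_on, rule integral_has_real_derivative) (use assms in auto)

theorem mainTheorem1:
  fixes phi1 phi2 q :: "real \<Rightarrow> real" and a1 b1 a2 b2 :: real
  assumes cont1: "continuous_on UNIV phi1"
    and cont2: "continuous_on UNIV phi2"
    and nonneg1: "\<And>x. phi1 x \<ge> 0"
    and nonneg2: "\<And>x. phi2 x \<ge> 0"
    and dens1: "(phi1 has_integral 1) UNIV"
    and dens2: "(phi2 has_integral 1) UNIV"
    and supp1: "{x. phi1 x > 0} = {a1<..<b1}"
    and supp2: "{y. phi2 y > 0} = {a2<..<b2}"
    and a1_zero: "a1 = 0"
    and q_unif: "uniformly_continuous_on UNIV q"
    and q_nonneg: "\<And>x. q x \<ge> 0"
    and q_int: "q absolutely_integrable_on UNIV"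
  shows "(\<lambda>n. \<Sum>k<n.
            (gridpt phi1 a1 b1 n (Suc k) + gridpt phi1 a1 b1 n k) / 2 *
            integral {Kmap phi1 phi2 a2 b2 (gridpt phi1 a1 b1 n k) ..
                      Kmap phi1 phi2 a2 b2 (gridpt phi1 a1 b1 n (Suc k))} q)
         \<longlonglongrightarrow>
         integral {a1<..<b1}
           (\<lambda>x. x * (phi1 x / phi2 (Kmap phi1 phi2 a2 b2 x)) * q (Kmap phi1 phi2 a2 b2 x))"
proof -
  interpret D1: dens phi1 a1 b1 using cont1 nonneg1 dens1 supp1 by unfold_locales
  interpret D2: dens phi2 a2 b2 using cont2 nonneg2 dens2 supp2 by unfold_locales
  have qc: "continuous_on S q" for S
    using uniformly_continuous_imp_continuous[OF q_unif] continuous_on_subset by blast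
  define K where "K x = D2.Cinv (D1.C x)" for x
  define Q where "Q y = integral {a2..y} q" for y
  define R where "R x = Q (K x)" for x
  define g where "g x = phi1 x / phi2 (K x) * q (K x)" for x
  define P where "P x = x * R x - integral {a1..x} R" for x
  define xg where "xg n k = D1.Cinv (real k / real n)" for n k :: nat
  have Kmap_eq: "Kmap phi1 phi2 a2 b2 x = K x" if "x \<in> {a1..b1}" for x
    unfolding Kmap_def K_def D2.cdf_inv D1.C_cdf[OF that] ..
  have grid_eq: "gridpt phi1 a1 b1 n k = xg n k" for n k
    unfolding gridpt_def xg_def D1.cdf_inv ..
  have K_in: "K x \<in> {a2..b2}" if "x \<in> {a1..b1}" for x
    unfolding K_def using D1.C_image that by (intro D2.Cinv_in) auto
  have K_open: "K x \<in> {a2<..<b2}" if "x \<in> {a1<..<b1}" for x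
    unfolding K_def using D1.C_open[OF that] by (intro D2.Cinv_open)
  have K_cont: "continuous_on {a1..b1} K"
    unfolding K_def[abs_def]
    by (rule continuous_on_compose2[OF D2.Cinv_cont D1.C_cont]) (use D1.C_image in auto)
  have K_mono: "K x \<le> K y" if "x \<in> {a1..b1}" "y \<in> {a1..b1}" "x \<le> y" for x y
    unfolding K_def using that D1.C_image D1.C_strict[of x y]
    by (intro D2.Cinv_mono) (auto simp: less_eq_real_def)
  have K_deriv: "(K has_real_derivative (inverse (phi2 (K x)) * phi1 x)) (at x)"
    if x: "x \<in> {a1<..<b1}" for x
  proof -
    have t: "D1.C x \<in> {0<..<1}" using D1.C_open[OF x] .
    have "(D2.Cinv has_real_derivative inverse (phi2 (K x))) (at (D1.C x))"
    proof (rule DERIV_inverse_function[where f = D2.C and a = 0 and b = 1])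
      show "(D2.C has_real_derivative phi2 (K x)) (at (D2.Cinv (D1.C x)))"
        unfolding K_def by (rule D2.C_deriv, rule D2.Cinv_open[OF t])
      show "phi2 (K x) \<noteq> 0" using D2.pos_in[OF K_open[OF x]] by simp
      show "0 < D1.C x" "D1.C x < 1" using t by auto
      show "D2.C (D2.Cinv y) = y" if "0 < y" "y < 1" for y
        using that by (intro D2.C_Cinv) auto
      show "isCont D2.Cinv (D1.C x)"
        by (rule continuous_on_interior[OF D2.Cinv_cont]) (use t in auto)
    qed
    then show ?thesis
      unfolding K_def[abs_def] by (rule DERIV_chain2) (rule D1.C_deriv[OF x])
  qed
  have Q_cont: "continuous_on {a2..b2} Q"
    unfolding Q_def[abs_def] by (rule cont_int[OF qc])
  have Q_deriv: "(Q has_real_derivative q y) (at y)" if "y \<in> {a2<..<b2}" for y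
    unfolding Q_def[abs_def] by (rule deriv_int_at[OF qc that])
  have R_cont: "continuous_on {a1..b1} R"
    unfolding R_def[abs_def]
    by (rule continuous_on_compose2[OF Q_cont K_cont]) (use K_in in auto)
  have R_deriv: "(R has_real_derivative g x) (at x)" if x: "x \<in> {a1<..<b1}" for x
  proof -
    have "(R has_real_derivative q (K x) * (inverse (phi2 (K x)) * phi1 x)) (at x)"
      unfolding R_def[abs_def] by (rule DERIV_chain2[OF Q_deriv[OF K_open[OF x]] K_deriv[OF x]])
    then show ?thesis unfolding g_def by (simp add: divide_inverse mult_ac)
  qed
  have g_nonneg: "g x \<ge> 0" for x
    unfolding g_def by (intro mult_nonneg_nonneg divide_nonneg_nonneg nonneg1 nonneg2 q_nonneg)
  have P_cont: "continuous_on {a1..b1} P"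
    unfolding P_def[abs_def]
    by (intro continuous_intros R_cont cont_int)
  have P_deriv: "(P has_real_derivative x * g x) (at x)" if x: "x \<in> {a1<..<b1}" for x
  proof -
    have "(P has_real_derivative (x * g x + 1 * R x - R x)) (at x)"
      unfolding P_def[abs_def]
      by (rule DERIV_diff[OF DERIV_mult'[OF DERIV_ident R_deriv[OF x]] deriv_int_at[OF R_cont x]])
    then show ?thesis by simp
  qed
  have g_int: "(g has_integral (R t - R s)) {s..t}"
    if "a1 \<le> s" "s \<le> t" "t \<le> b1" for s t
    by (rule fundamental_theorem_of_calculus_interior)
       (use that in \<open>auto intro: continuous_on_subset[OF R_cont] R_deriv
           simp: has_real_derivative_iff_has_vector_derivative[symmetric]\<close>)
  have xg_int: "((\<lambda>x. x * g x) has_integral (P t - P s)) {s..t}"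
    if "a1 \<le> s" "s \<le> t" "t \<le> b1" for s t
    by (rule fundamental_theorem_of_calculus_interior)
       (use that in \<open>auto intro: continuous_on_subset[OF P_cont] P_deriv
           simp: has_real_derivative_iff_has_vector_derivative[symmetric]\<close>)
  have frac_in: "real k / real n \<in> {0..1}" if "k \<le> n" for n k :: nat
  proof (cases "n = 0")
    case False
    then have "real k / real n \<le> 1" using that by (simp add: divide_le_eq_1)
    then show ?thesis by simp
  qed simp
  have x0: "xg n 0 = a1" for n
    unfolding xg_def using D1.Cinv_C[of a1] D1.Ca D1.ab by simp
  have xn: "xg n n = b1" if "n > 0" for n
    unfolding xg_def using that D1.Cinv_C[of b1] D1.Cb D1.ab by simp
  have xg_in: "xg n k \<in> {a1..b1}" if "k \<le> n" for n k
    unfolding xg_def by (rule D1.Cinv_in[OF frac_in[OF that]])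
  have xg_mono: "xg n k \<le> xg n (Suc k)" if "k < n" for n k
    unfolding xg_def
  proof (rule D1.Cinv_mono[OF frac_in frac_in])
    show "real k / real n \<le> real (Suc k) / real n" by (simp add: divide_right_mono)
  qed (use that in simp_all)
  have V_eq: "integral {a1<..<b1} (\<lambda>x. x * (phi1 x / phi2 (Kmap phi1 phi2 a2 b2 x)) * q (Kmap phi1 phi2 a2 b2 x))
      = P b1 - P a1"
  proof -
    have "((\<lambda>x. x * g x) has_integral (P b1 - P a1)) {a1..b1}"
      by (rule xg_int) (use D1.ab in simp_all)
    then have "((\<lambda>x. x * g x) has_integral (P b1 - P a1)) (box a1 b1)"
      unfolding has_integral_open_interval cbox_interval .
    then have h1: "((\<lambda>x. x * g x) has_integral (P b1 - P a1)) {a1<..<b1}"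
      unfolding box_real .
    have "((\<lambda>x. x * g x) has_integral (P b1 - P a1)) {a1<..<b1} \<longleftrightarrow>
          ((\<lambda>x. x * (phi1 x / phi2 (Kmap phi1 phi2 a2 b2 x)) * q (Kmap phi1 phi2 a2 b2 x)) has_integral (P b1 - P a1)) {a1<..<b1}"
    proof (rule has_integral_cong)
      fix x assume "x \<in> {a1<..<b1}"
      then have "Kmap phi1 phi2 a2 b2 x = K x" by (intro Kmap_eq) simp
      then show "x * g x = x * (phi1 x / phi2 (Kmap phi1 phi2 a2 b2 x)) * q (Kmap phi1 phi2 a2 b2 x)"
        unfolding g_def by (simp only: mult.assoc)
    qed
    with h1 show ?thesis by (metis integral_unique)
  qed
  have i1: "xg n k \<in> {a1..b1}" "xg n (Suc k) \<in> {a1..b1}" if "k < n" for n k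
    using xg_in that by auto
  have int_q: "integral {K (xg n k) .. K (xg n (Suc k))} q = R (xg n (Suc k)) - R (xg n k)"
    if "k < n" for n k
  proof -
    have "K (xg n k) \<le> K (xg n (Suc k))" using K_mono[OF i1[OF that]] xg_mono[OF that] by auto
    moreover have "a2 \<le> K (xg n k)" "K (xg n (Suc k)) \<le> b2"
      using K_in[OF i1(1)[OF that]] K_in[OF i1(2)[OF that]] by auto
    ultimately have "integral {a2..K (xg n k)} q + integral {K (xg n k)..K (xg n (Suc k))} q
        = integral {a2..K (xg n (Suc k))} q"
      by (intro Henstock_Kurzweil_Integration.integral_combine integrable_continuous_real qc)
    then show ?thesis unfolding R_def Q_def by linarith
  qed
  define Vn where "Vn n = (\<Sum>k<n. (xg n (Suc k) + xg n k) / 2 * (R (xg n (Suc k)) - R (xg n k)))" for n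
  have seq_eq: "(\<lambda>n. \<Sum>k<n.
            (gridpt phi1 a1 b1 n (Suc k) + gridpt phi1 a1 b1 n k) / 2 *
            integral {Kmap phi1 phi2 a2 b2 (gridpt phi1 a1 b1 n k) ..
                      Kmap phi1 phi2 a2 b2 (gridpt phi1 a1 b1 n (Suc k))} q) = Vn"
  proof (rule ext)
    fix n
    show "(\<Sum>k<n. (gridpt phi1 a1 b1 n (Suc k) + gridpt phi1 a1 b1 n k) / 2 *
            integral {Kmap phi1 phi2 a2 b2 (gridpt phi1 a1 b1 n k) ..
                      Kmap phi1 phi2 a2 b2 (gridpt phi1 a1 b1 n (Suc k))} q) = Vn n"
      unfolding Vn_def grid_eq
    proof (rule sum.cong)
      fix k assume "k \<in> {..<n}"
      then have k: "k < n" by simp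
      show "(xg n (Suc k) + xg n k) / 2 * integral {Kmap phi1 phi2 a2 b2 (xg n k)..Kmap phi1 phi2 a2 b2 (xg n (Suc k))} q
          = (xg n (Suc k) + xg n k) / 2 * (R (xg n (Suc k)) - R (xg n k))"
        using Kmap_eq[OF i1(1)[OF k]] Kmap_eq[OF i1(2)[OF k]] int_q[OF k] by simp
    qed simp
  qed
  define dR where "dR n k = R (xg n (Suc k)) - R (xg n k)" for n k
  define hh where "hh n k = xg n (Suc k) - xg n k" for n k
  have dR_nonneg: "dR n k \<ge> 0" if "k < n" for n k
    using has_integral_nonneg[OF g_int[of "xg n k" "xg n (Suc k)"]] g_nonneg i1[OF that] xg_mono[OF that]
    unfolding dR_def by auto
  have piece: "\<bar>(xg n (Suc k) + xg n k) / 2 * dR n k - (P (xg n (Suc k)) - P (xg n k))\<bar> \<le> hh n k / 2 * dR n k"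
    if "k < n" for n k
  proof -
    have "\<bar>(P (xg n (Suc k)) - P (xg n k)) - (xg n (Suc k) + xg n k) / 2 * dR n k\<bar> \<le> hh n k / 2 * dR n k"
      unfolding dR_def hh_def
      by (rule piece_bound[OF xg_mono[OF that] g_int xg_int])
         (use i1[OF that] xg_mono[OF that] g_nonneg in auto)
    then show ?thesis by (simp add: abs_minus_commute)
  qed
  have bound: "\<bar>Vn n - (P b1 - P a1)\<bar> \<le> (\<Sum>k<n. hh n k / 2 * dR n k)" if n: "n > 0" for n
  proof -
    have "P b1 - P a1 = (\<Sum>k<n. P (xg n (Suc k)) - P (xg n k))"
      by (subst sum_lessThan_telescope) (simp add: x0 xn[OF n])
    then have "Vn n - (P b1 - P a1) = (\<Sum>k<n. (xg n (Suc k) + xg n k) / 2 * dR n k - (P (xg n (Suc k)) - P (xg n k)))"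
      unfolding Vn_def dR_def by (simp add: sum_subtractf)
    also have "\<bar>\<dots>\<bar> \<le> (\<Sum>k<n. \<bar>(xg n (Suc k) + xg n k) / 2 * dR n k - (P (xg n (Suc k)) - P (xg n k))\<bar>)"
      by (rule sum_abs)
    also have "\<dots> \<le> (\<Sum>k<n. hh n k / 2 * dR n k)"
      by (rule sum_mono) (use piece in auto)
    finally show ?thesis .
  qed
  have lim: "Vn \<longlonglongrightarrow> P b1 - P a1"
  proof (rule LIMSEQ_I)
    fix r :: real assume r: "0 < r"
    define M where "M = R b1 - R a1"
    have M0: "M \<ge> 0" using has_integral_nonneg[OF g_int[of a1 b1]] g_nonneg D1.ab by (auto simp: M_def)
    define e where "e = r / (M + 1)"
    have e: "e > 0" using r M0 by (simp add: e_def)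
    have "uniformly_continuous_on {0..1} D1.Cinv"
      by (rule compact_uniformly_continuous[OF D1.Cinv_cont compact_Icc])
    then obtain d where d: "d > 0" and uc0: "\<forall>s\<in>{0..1}. \<forall>t\<in>{0..1}. dist t s < d \<longrightarrow>
        dist (D1.Cinv t) (D1.Cinv s) < e"
      unfolding uniformly_continuous_on_def using e by blast
    have uc: "dist (D1.Cinv t) (D1.Cinv s) < e" if "s \<in> {0..1}" "t \<in> {0..1}" "dist t s < d" for s t
      using uc0 that by blast
    obtain N :: nat where N: "inverse (real (Suc N)) < d" using reals_Archimedean d by blast
    show "\<exists>no. \<forall>n\<ge>no. norm (Vn n - (P b1 - P a1)) < r"
    proof (intro exI allI impI)
      fix n assume nN: "Suc N \<le> n"
      then have n: "n > 0" by simp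
      have invn: "1 / real n < d"
      proof -
        have "1 / real n \<le> inverse (real (Suc N))"
          using nN by (simp add: divide_simps)
        then show ?thesis using N by linarith
      qed
      have hk: "hh n k < e" if k: "k < n" for k
      proof -
        have dd: "dist (real (Suc k) / real n) (real k / real n) = 1 / real n"
        proof -
          have "real (Suc k) / real n - real k / real n = 1 / real n"
            using n by (simp add: diff_divide_distrib[symmetric])
          then show ?thesis using n by (simp add: dist_real_def)
        qed
        have "dist (D1.Cinv (real (Suc k) / real n)) (D1.Cinv (real k / real n)) < e"
          by (rule uc[OF frac_in frac_in]) (use k dd invn in auto)
        then show ?thesis using xg_mono[OF k] unfolding hh_def xg_def dist_real_def by simp
      qed
      have "\<bar>Vn n - (P b1 - P a1)\<bar> \<le> (\<Sum>k<n. hh n k / 2 * dR n k)" by (rule bound[OF n])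
      also have "\<dots> \<le> (\<Sum>k<n. e / 2 * dR n k)"
        by (rule sum_mono, rule mult_right_mono) (use hk dR_nonneg in \<open>auto simp: less_imp_le\<close>)
      also have "\<dots> = e / 2 * M"
        unfolding sum_distrib_left[symmetric] dR_def M_def
        by (subst sum_lessThan_telescope) (simp add: x0 xn[OF n])
      also have "\<dots> < r"
      proof -
        have "e * M < r" using r M0 unfolding e_def by (simp add: divide_simps)
        moreover have "e * M \<ge> 0" using e M0 by simp
        ultimately show ?thesis by linarith
      qed
      finally show "norm (Vn n - (P b1 - P a1)) < r" by simp
    qed
  qed
  show ?thesis unfolding seq_eq V_eq by (rule lim)
qed

end
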